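(* Suppose there exist a symmetric matrix $B\in\mathbb{R}^{n^2\times n^2}$ with $B\ge0$ entrywise and $B\circ xx^{\top}=0$, and symmetric matrices $T,K,Z,H\in\mathbb{R}^{n\times n}$, such that the matrix $Q:=M-B-S$, where $S=T\otimes I_n+I_n\otimes K+J_n\otimes H+Z\otimes J_n$, satisfies $Qx=0$ and $Q\succeq c\,(I_{n^2}-n^{-1}xx^{\top})$ for some $c\ge0$. Then $X=xx^{\top}$ is a global minimizer of SDR I. If moreover $c>0$, then $xx^{\top}$ is the unique global minimizer of SDR I.
   Context: $A,\Delta\in\mathbb{R}^{n\times n}$ are symmetric, $C=A+\Delta$, $M=(I_n\otimes A-C\otimes I_n)^2$, $x=\mathrm{vec}(I_n)\in\mathbb{R}^{n^2}$ (column stacking), $J_n$ is the all-ones $n\times n$ matrix, $\otimes$ the Kronecker product, $\circ$ the Hadamard (entrywise) product. For $X\in\mathbb{R}^{n^2\times n^2}$, $X_{ij}$ denotes its $(i,j)$-th $n\times n$ block. SDR I is: minimize $\langle M,X\rangle$ over symmetric $X\in\mathbb{R}^{n^2\times n^2}$ subject to $X\succeq0$, $X\ge0$ entrywise, $\mathrm{Tr}(X_{ij})=\delta_{ij}$ and $\langle X_{ij},J_n\rangle=1$ for all $i,j$, $\sum_i X_{ii}=I_n$, $\sum_{i,j}X_{ij}=J_n$. *)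

theory Defs
  imports "HOL-Analysis.Analysis"
begin

text \<open>Convention: an index of R^(n^2) is a pair (a,b) of indices in 'n, standing for
  position (a-1)n+b. Thus the first component is the block index and the second the
  position within the block.\<close>

definition kron :: "real^('n::finite)^'n \<Rightarrow> real^('m::finite)^'m \<Rightarrow> real^('n \<times> 'm)^('n \<times> 'm)" where
  "kron A B = (\<chi> p q. A $ fst p $ fst q * B $ snd p $ snd q)"

definition hadamard :: "real^'m^'k \<Rightarrow> real^'m^'k \<Rightarrow> real^'m^'k" where
  "hadamard A B = (\<chi> i j. A $ i $ j * B $ i $ j)"

definition outer :: "real^'m \<Rightarrow> real^'m \<Rightarrow> real^'m^'m" where
  "outer x y = (\<chi> i j. x $ i * y $ j)"

definition Jmat :: "real^'n^('n::finite)" where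
  "Jmat = (\<chi> i j. 1)"

text \<open>vec(I_n) with column stacking: entry at position (a-1)n+b is I_{b a}.\<close>
definition vecI :: "real^('n::finite \<times> 'n)" where
  "vecI = (\<chi> p. if snd p = fst p then 1 else 0)"

definition blk :: "real^('n::finite \<times> 'n)^('n \<times> 'n) \<Rightarrow> 'n \<Rightarrow> 'n \<Rightarrow> real^'n^'n" where
  "blk X i j = (\<chi> a b. X $ (i, a) $ (j, b))"

definition frob :: "real^('m::finite)^('k::finite) \<Rightarrow> real^'m^'k \<Rightarrow> real" where
  "frob A B = (\<Sum>i\<in>UNIV. \<Sum>j\<in>UNIV. A $ i $ j * B $ i $ j)"

definition symmetric_mat :: "real^('m::finite)^'m \<Rightarrow> bool" where
  "symmetric_mat A \<longleftrightarrow> transpose A = A"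

definition psd :: "real^('m::finite)^'m \<Rightarrow> bool" where
  "psd A \<longleftrightarrow> symmetric_mat A \<and> (\<forall>v. 0 \<le> v \<bullet> (A *v v))"

definition nonneg_mat :: "real^'m^'k \<Rightarrow> bool" where
  "nonneg_mat A \<longleftrightarrow> (\<forall>i j. 0 \<le> A $ i $ j)"

definition SDR1_feasible :: "real^('n::finite \<times> 'n)^('n \<times> 'n) \<Rightarrow> bool" where
  "SDR1_feasible X \<longleftrightarrow>
     symmetric_mat X \<and> psd X \<and> nonneg_mat X \<and>
     (\<forall>i j. trace (blk X i j) = (if i = j then 1 else 0)) \<and>
     (\<forall>i j. frob (blk X i j) (Jmat :: real^'n^'n) = 1) \<and>
     (\<Sum>i\<in>UNIV. blk X i i) = mat 1 \<and>
     (\<Sum>i\<in>UNIV. \<Sum>j\<in>UNIV. blk X i j) = Jmat"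

definition SDR1_global_min :: "real^('n::finite \<times> 'n)^('n \<times> 'n) \<Rightarrow> real^('n \<times> 'n)^('n \<times> 'n) \<Rightarrow> bool" where
  "SDR1_global_min M X0 \<longleftrightarrow> SDR1_feasible X0 \<and>
     (\<forall>X. SDR1_feasible X \<longrightarrow> frob M X0 \<le> frob M X)"

definition SDR1_unique_global_min :: "real^('n::finite \<times> 'n)^('n \<times> 'n) \<Rightarrow> real^('n \<times> 'n)^('n \<times> 'n) \<Rightarrow> bool" where
  "SDR1_unique_global_min M X0 \<longleftrightarrow> SDR1_global_min M X0 \<and>
     (\<forall>X. SDR1_global_min M X \<longrightarrow> X = X0)"

end

theory Submission
  imports Defs
begin


definition qf :: "real^('m::finite)^'m \<Rightarrow> real^'m \<Rightarrow> real^'m \<Rightarrow> real" where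
  "qf X u v = (\<Sum>i\<in>UNIV. \<Sum>j\<in>UNIV. u$i * X$i$j * v$j)"

lemma inner_mv: "v \<bullet> (X *v w) = qf X v w"
  by (simp add: inner_vec_def matrix_vector_mult_def qf_def sum_distrib_left mult.assoc)

lemma psd_qf: "psd X \<Longrightarrow> 0 \<le> qf X v v"
  unfolding psd_def by (metis inner_mv)

lemma sym_entry: "symmetric_mat X \<Longrightarrow> X$i$j = X$j$i"
proof -
  assume "symmetric_mat X"
  then have "transpose X $ i $ j = X $ i $ j" unfolding symmetric_mat_def by simp
  then show ?thesis by (simp add: transpose_def)
qed

lemma qf_sym: "symmetric_mat X \<Longrightarrow> qf X u w = qf X w u"
  unfolding qf_def
  apply (subst sum.swap)
  apply (intro sum.cong refl)
  apply (simp add: sym_entry[of X])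
  done

lemma qf_expand: assumes "symmetric_mat X"
  shows "qf X (w + t *s u) (w + t *s u) = qf X w w + 2*t*qf X u w + t^2 * qf X u u"
proof -
  have "qf X (w + t *s u) (w + t *s u) = qf X w w + t * qf X u w + t * qf X w u + t^2 * qf X u u"
    unfolding qf_def by (simp add: algebra_simps sum.distrib sum_distrib_left power2_eq_square)
  then show ?thesis using qf_sym[OF assms, of w u] by simp
qed

lemma CS: assumes "psd X" "qf X u u > 0"
  shows "(qf X u w)^2 \<le> qf X u u * qf X w w"
proof -
  let ?a = "qf X w w" and ?b = "qf X u w" and ?c = "qf X u u"
  have sym: "symmetric_mat X" using assms psd_def by blast
  have "0 \<le> qf X (w + (- ?b / ?c) *s u) (w + (- ?b / ?c) *s u)" by (rule psd_qf[OF assms(1)])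
  also have "\<dots> = ?a + 2*(- ?b / ?c)* ?b + (- ?b / ?c)^2 * ?c" by (rule qf_expand[OF sym])
  also have "\<dots> = ?a - ?b^2 / ?c" using assms(2) by (simp add: field_simps power2_eq_square)
  finally have "?b^2 / ?c \<le> ?a" by simp
  then show ?thesis using assms(2) by (simp add: field_simps mult.commute)
qed

lemma if_mult1: "(if P then 1 else 0) * (a::real) = (if P then a else 0)" by simp
lemma if_mult2: "(a::real) * (if P then 1 else 0) = (if P then a else 0)" by simp

lemma qf_axis: "qf X (axis k 1) v = (\<Sum>j\<in>UNIV. X$k$j * v$j)"
proof -
  have "\<And>i. (\<Sum>j\<in>UNIV. (if i = k then X$i$j else 0) * v$j) = (if i = k then \<Sum>j\<in>UNIV. X$k$j * v$j else 0)" by auto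
  then show ?thesis unfolding qf_def axis_def by (simp add: if_mult1)
qed

lemma qf_axis2: "qf X (axis k 1) (axis j 1) = X$k$j"
  apply (subst qf_axis) by (simp add: axis_def if_mult2)

lemma psd_diag: "psd X \<Longrightarrow> 0 \<le> X$k$k"
  using psd_qf[of X "axis k 1"] qf_axis2 by metis

lemma psd_zero_diag: assumes "psd X" "X$k$k = 0" shows "X$k$j = 0"
proof (rule ccontr)
  assume ne: "X$k$j \<noteq> 0"
  have sym: "symmetric_mat X" using assms psd_def by blast
  let ?t = "- (X$j$j + 1) / (2 * X$k$j)"
  have "0 \<le> qf X (axis j 1 + ?t *s axis k 1) (axis j 1 + ?t *s axis k 1)" by (rule psd_qf[OF assms(1)])
  also have "\<dots> = X$j$j + 2 * ?t * X$k$j + ?t^2 * X$k$k"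
    using qf_expand[OF sym] qf_axis2 by metis
  also have "\<dots> = -1" using ne assms(2) by (simp add: field_simps)
  finally show False by simp
qed


lemma frob_outer: "frob R (\<chi> i j. u$i * u$j) = qf R u u"
  unfolding frob_def qf_def by (simp add: mult_ac)

lemma frob_add: "frob R (X + Y) = frob R X + frob R Y"
  unfolding frob_def by (simp add: algebra_simps sum.distrib)

lemma frob_add1: "frob (X + Y) R = frob X R + frob Y R"
  unfolding frob_def by (simp add: algebra_simps sum.distrib)

lemma frob_diff1: "frob (X - Y) R = frob X R - frob Y R"
  unfolding frob_def by (simp add: algebra_simps sum_subtractf)

lemma frob_scale1: "frob (a *\<^sub>R X) R = a * frob X R"
  unfolding frob_def by (simp add: algebra_simps sum_distrib_left)

lemma frob_scale: "frob R (a *\<^sub>R X) = a * frob R X"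
  unfolding frob_def by (simp add: algebra_simps sum_distrib_left)

lemma psd_frob: assumes R: "psd R" shows "psd X \<Longrightarrow> 0 \<le> frob R X"
proof (induction "card {i. X$i$i \<noteq> 0}" arbitrary: X rule: less_induct)
  case less
  show ?case
  proof (cases "\<exists>k. X$k$k \<noteq> 0")
    case False
    then have "X = 0" using psd_zero_diag[OF less.prems] by (simp add: vec_eq_iff)
    then show ?thesis by (simp add: frob_def)
  next
    case True
    then obtain k where k: "X$k$k \<noteq> 0" by blast
    have symX: "symmetric_mat X" using less.prems psd_def by blast
    define c where "c = X$k$k"
    have cpos: "c > 0" using psd_diag[OF less.prems, of k] k c_def by simp
    define a where "a = (\<chi> j. X$k$j)"
    define Y where "Y = (\<chi> i j. X$i$j - a$i * a$j / c)"
    have XY: "X = Y + (1/c) *\<^sub>R (\<chi> i j. a$i * a$j)"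
      using cpos by (simp add: Y_def vec_eq_iff)
    have symY: "symmetric_mat Y"
      unfolding symmetric_mat_def Y_def transpose_def
      by (simp add: vec_eq_iff sym_entry[OF symX] mult.commute)
    have qfa: "qf X (axis k 1) w = (\<Sum>i\<in>UNIV. a$i * w$i)" for w
      by (simp add: qf_axis a_def)
    have qfY: "qf Y w w = qf X w w - (\<Sum>i\<in>UNIV. a$i * w$i)^2 / c" for w
    proof -
      have "qf Y w w = (\<Sum>i\<in>UNIV. \<Sum>j\<in>UNIV. w$i * X$i$j * w$j - (w$i * a$i) * (a$j * w$j) / c)"
        unfolding qf_def Y_def by (simp add: algebra_simps)
      also have "\<dots> = qf X w w - (\<Sum>i\<in>UNIV. \<Sum>j\<in>UNIV. (w$i * a$i) * (a$j * w$j)) / c"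
        unfolding qf_def by (simp add: sum_subtractf sum_divide_distrib)
      also have "(\<Sum>i\<in>UNIV. \<Sum>j\<in>UNIV. (w$i * a$i) * (a$j * w$j)) = (\<Sum>i\<in>UNIV. a$i * w$i)^2"
        by (simp add: power2_eq_square sum_product mult_ac)
      finally show ?thesis .
    qed
    have psdY: "psd Y"
      unfolding psd_def
    proof (intro conjI allI symY)
      fix w
      have cc: "qf X (axis k 1) (axis k 1) = c" by (simp add: qf_axis2 c_def)
      have "(qf X (axis k 1) w)^2 \<le> c * qf X w w"
        using CS[OF less.prems, of "axis k 1" w] cc cpos by simp
      then have "(\<Sum>i\<in>UNIV. a$i * w$i)^2 / c \<le> qf X w w"
        using cpos by (simp add: qfa field_simps)
      then show "0 \<le> w \<bullet> (Y *v w)" by (simp add: inner_mv qfY)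
    qed
    have sub: "{i. Y$i$i \<noteq> 0} \<subset> {i. X$i$i \<noteq> 0}"
    proof -
      have "Y$k$k = 0" using cpos by (simp add: Y_def a_def c_def power2_eq_square)
      moreover have "Y$i$i = 0" if "X$i$i = 0" for i
      proof -
        have "X$i$k = 0" using psd_zero_diag[OF less.prems that] .
        then have "a$i = 0" by (simp add: a_def sym_entry[OF symX, of k i])
        then show ?thesis using that by (simp add: Y_def)
      qed
      ultimately show ?thesis using k by blast
    qed
    have "card {i. Y$i$i \<noteq> 0} < card {i. X$i$i \<noteq> 0}"
      by (rule psubset_card_mono[OF _ sub]) simp
    then have "0 \<le> frob R Y" using less.hyps psdY by blast
    moreover have "0 \<le> frob R (\<chi> i j. a$i * a$j)" using frob_outer psd_qf[OF R] by metis
    ultimately show ?thesis using cpos by (subst XY) (simp add: frob_add frob_scale)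
  qed
qed



lemma sum_pair: "(\<Sum>p\<in>UNIV. f p) = (\<Sum>i\<in>UNIV. \<Sum>a\<in>UNIV. (f (i,a) :: real))"
  by (simp add: sum.cartesian_product UNIV_Times_UNIV[symmetric] del: UNIV_Times_UNIV)

lemma frobA: "frob M (X :: real^('n::finite\<times>'n)^('n\<times>'n)) =
   (\<Sum>i\<in>UNIV. \<Sum>j\<in>UNIV. \<Sum>a\<in>UNIV. \<Sum>b\<in>UNIV. M$(i,a)$(j,b) * X$(i,a)$(j,b))"
proof -
  have "frob M X = (\<Sum>i\<in>UNIV. \<Sum>a\<in>UNIV. \<Sum>j\<in>UNIV. \<Sum>b\<in>UNIV. M$(i,a)$(j,b) * X$(i,a)$(j,b))"
    unfolding frob_def by (simp add: sum_pair)
  also have "\<dots> = (\<Sum>i\<in>UNIV. \<Sum>j\<in>UNIV. \<Sum>a\<in>UNIV. \<Sum>b\<in>UNIV. M$(i,a)$(j,b) * X$(i,a)$(j,b))"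
    by (rule sum.cong[OF refl], rule sum.swap)
  finally show ?thesis .
qed

lemma frobB: "frob M (X :: real^('n::finite\<times>'n)^('n\<times>'n)) =
   (\<Sum>a\<in>UNIV. \<Sum>b\<in>UNIV. \<Sum>i\<in>UNIV. \<Sum>j\<in>UNIV. M$(i,a)$(j,b) * X$(i,a)$(j,b))"
proof -
  have "frob M X = (\<Sum>i\<in>UNIV. \<Sum>j\<in>UNIV. \<Sum>a\<in>UNIV. \<Sum>b\<in>UNIV. M$(i,a)$(j,b) * X$(i,a)$(j,b))"
    by (rule frobA)
  also have "\<dots> = (\<Sum>i\<in>UNIV. \<Sum>a\<in>UNIV. \<Sum>j\<in>UNIV. \<Sum>b\<in>UNIV. M$(i,a)$(j,b) * X$(i,a)$(j,b))"
    by (rule sum.cong[OF refl], rule sum.swap)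
  also have "\<dots> = (\<Sum>a\<in>UNIV. \<Sum>i\<in>UNIV. \<Sum>j\<in>UNIV. \<Sum>b\<in>UNIV. M$(i,a)$(j,b) * X$(i,a)$(j,b))"
    by (rule sum.swap)
  also have "\<dots> = (\<Sum>a\<in>UNIV. \<Sum>i\<in>UNIV. \<Sum>b\<in>UNIV. \<Sum>j\<in>UNIV. M$(i,a)$(j,b) * X$(i,a)$(j,b))"
    by (rule sum.cong[OF refl], rule sum.cong[OF refl], rule sum.swap)
  also have "\<dots> = (\<Sum>a\<in>UNIV. \<Sum>b\<in>UNIV. \<Sum>i\<in>UNIV. \<Sum>j\<in>UNIV. M$(i,a)$(j,b) * X$(i,a)$(j,b))"
    by (rule sum.cong[OF refl], rule sum.swap)
  finally show ?thesis .
qed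

context
  fixes X :: "real^('n::finite\<times>'n)^('n\<times>'n)"
  assumes F: "SDR1_feasible X"
begin

lemma F1: "(\<Sum>a\<in>UNIV. X$(i,a)$(j,a)) = (if i = j then 1 else 0)"
  using F unfolding SDR1_feasible_def by (metis (no_types, lifting) trace_def blk_def vec_lambda_beta sum.cong)

lemma F2: "(\<Sum>a\<in>UNIV. \<Sum>b\<in>UNIV. X$(i,a)$(j,b)) = 1"
proof -
  have "frob (blk X i j) (Jmat :: real^'n^'n) = 1" using F unfolding SDR1_feasible_def by blast
  then show ?thesis by (simp add: frob_def blk_def Jmat_def)
qed

lemma F3: "(\<Sum>i\<in>UNIV. X$(i,a)$(i,b)) = (if a = b then 1 else 0)"
proof -
  have "(\<Sum>i\<in>UNIV. blk X i i) = mat 1" using F unfolding SDR1_feasible_def by blast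
  then have "(\<Sum>i\<in>UNIV. blk X i i) $ a $ b = mat 1 $ a $ b" by simp
  then show ?thesis by (simp add: sum_component blk_def mat_def)
qed

lemma F4: "(\<Sum>i\<in>UNIV. \<Sum>j\<in>UNIV. X$(i,a)$(j,b)) = 1"
proof -
  have "(\<Sum>i\<in>UNIV. \<Sum>j\<in>UNIV. blk X i j) = Jmat" using F unfolding SDR1_feasible_def by blast
  then have "(\<Sum>i\<in>UNIV. \<Sum>j\<in>UNIV. blk X i j) $ a $ b = Jmat $ a $ b" by simp
  then show ?thesis by (simp add: sum_component blk_def Jmat_def)
qed

lemma Fnn: "0 \<le> X$p$q"
  using F unfolding SDR1_feasible_def nonneg_mat_def by blast

lemma Fle1: "X$(i,a)$(j,b) \<le> 1"
proof -
  have "X$(i,a)$(j,b) \<le> (\<Sum>b\<in>UNIV. X$(i,a)$(j,b))"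
    by (rule member_le_sum) (auto simp: Fnn)
  also have "\<dots> \<le> (\<Sum>a\<in>UNIV. \<Sum>b\<in>UNIV. X$(i,a)$(j,b))"
    by (rule member_le_sum[of _ _ "\<lambda>a. \<Sum>b\<in>UNIV. X$(i,a)$(j,b)"]) (auto intro: sum_nonneg simp: Fnn)
  finally show ?thesis using F2 by simp
qed

lemma ifm: "(a::real) * (if P then 1 else 0) * b = (if P then a*b else 0)" by simp

lemma ifm2: "(if P then 1 else 0) * (a::real) * b = (if P then a*b else 0)" by simp

lemma frobS:
  fixes T K H Z :: "real^'n^'n"
  shows "frob (kron T (mat 1) + kron (mat 1) K + kron Jmat H + kron Z Jmat) X =
    (\<Sum>i\<in>UNIV. T$i$i) + (\<Sum>a\<in>UNIV. K$a$a) + (\<Sum>a\<in>UNIV. \<Sum>b\<in>UNIV. H$a$b) + (\<Sum>i\<in>UNIV. \<Sum>j\<in>UNIV. Z$i$j)"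
proof -
  have 1: "frob (kron T (mat 1)) X = (\<Sum>i\<in>UNIV. T$i$i)"
  proof -
    have "frob (kron T (mat 1)) X = (\<Sum>i\<in>UNIV. \<Sum>j\<in>UNIV. T$i$j * (\<Sum>a\<in>UNIV. X$(i,a)$(j,a)))"
      unfolding frobA by (simp add: kron_def mat_def ifm sum_distrib_left)
    also have "\<dots> = (\<Sum>i\<in>UNIV. T$i$i)" by (simp add: F1 if_distrib cong: if_cong)
    finally show ?thesis .
  qed
  have 2: "frob (kron (mat 1) K) X = (\<Sum>a\<in>UNIV. K$a$a)"
  proof -
    have "frob (kron (mat 1) K) X = (\<Sum>a\<in>UNIV. \<Sum>b\<in>UNIV. K$a$b * (\<Sum>i\<in>UNIV. X$(i,a)$(i,b)))"
      unfolding frobB by (simp add: kron_def mat_def ifm2 sum_distrib_left)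
    also have "\<dots> = (\<Sum>a\<in>UNIV. K$a$a)" by (simp add: F3 if_distrib cong: if_cong)
    finally show ?thesis .
  qed
  have 3: "frob (kron Jmat H) X = (\<Sum>a\<in>UNIV. \<Sum>b\<in>UNIV. H$a$b)"
  proof -
    have "frob (kron Jmat H) X = (\<Sum>a\<in>UNIV. \<Sum>b\<in>UNIV. H$a$b * (\<Sum>i\<in>UNIV. \<Sum>j\<in>UNIV. X$(i,a)$(j,b)))"
      unfolding frobB by (simp add: kron_def Jmat_def sum_distrib_left)
    also have "\<dots> = (\<Sum>a\<in>UNIV. \<Sum>b\<in>UNIV. H$a$b)" by (simp add: F4)
    finally show ?thesis .
  qed
  have 4: "frob (kron Z Jmat) X = (\<Sum>i\<in>UNIV. \<Sum>j\<in>UNIV. Z$i$j)"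
  proof -
    have "frob (kron Z Jmat) X = (\<Sum>i\<in>UNIV. \<Sum>j\<in>UNIV. Z$i$j * (\<Sum>a\<in>UNIV. \<Sum>b\<in>UNIV. X$(i,a)$(j,b)))"
      unfolding frobA by (simp add: kron_def Jmat_def sum_distrib_left)
    also have "\<dots> = (\<Sum>i\<in>UNIV. \<Sum>j\<in>UNIV. Z$i$j)" by (simp add: F2)
    finally show ?thesis .
  qed
  show ?thesis by (simp add: frob_add1 1 2 3 4)
qed

end



lemma X0ent: "outer vecI vecI $ (i,a) $ (j,b) = (if i = a then (if j = b then 1 else 0) else (0::real))"
  by (auto simp: outer_def vecI_def)

lemma sum_if_out: "(\<Sum>j\<in>A. if P then f j else (0::real)) = (if P then \<Sum>j\<in>A. f j else 0)"
  by (cases P) simp_all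

lemma X0feas: "SDR1_feasible (outer vecI vecI :: real^('n::finite\<times>'n)^('n\<times>'n))"
proof -
  let ?X = "outer vecI vecI :: real^('n\<times>'n)^('n\<times>'n)"
  have sym: "symmetric_mat ?X"
    unfolding symmetric_mat_def by (simp add: vec_eq_iff transpose_def outer_def mult.commute)
  have psd: "psd ?X"
    unfolding psd_def
  proof (intro conjI allI sym)
    fix v :: "real^('n\<times>'n)"
    have "qf ?X v v = (\<Sum>i\<in>UNIV. v$i * vecI$i)^2"
      unfolding qf_def outer_def by (simp add: power2_eq_square sum_product mult_ac)
    then show "0 \<le> v \<bullet> (?X *v v)" by (simp add: inner_mv)
  qed
  have nn: "nonneg_mat ?X" unfolding nonneg_mat_def outer_def vecI_def by simp
  have tr: "trace (blk ?X i j) = (if i = j then 1 else 0)" for i j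
    unfolding trace_def blk_def by (simp add: X0ent)
  have fr: "frob (blk ?X i j) (Jmat :: real^'n^'n) = 1" for i j
    unfolding frob_def blk_def Jmat_def by (simp add: X0ent sum_if_out)
  have d: "(\<Sum>i\<in>UNIV. blk ?X i i) = mat 1"
    by (simp add: vec_eq_iff sum_component blk_def X0ent mat_def)
  have J: "(\<Sum>i\<in>UNIV. \<Sum>j\<in>UNIV. blk ?X i j) = Jmat"
    by (simp add: vec_eq_iff sum_component blk_def X0ent Jmat_def sum_if_out)
  show ?thesis unfolding SDR1_feasible_def using sym psd nn tr fr d J by blast
qed



lemma if_mult3: "(if P then f else 0) * (y::real) = (if P then f*y else 0)" by simp

lemma frobI: "SDR1_feasible X \<Longrightarrow> frob (mat 1) (X :: real^('n::finite\<times>'n)^('n\<times>'n)) = real CARD('n)"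
proof -
  assume F: "SDR1_feasible X"
  have "frob (mat 1) X = (\<Sum>p\<in>UNIV. X$p$p)"
    unfolding frob_def mat_def by (simp add: if_mult1 sum.delta)
  also have "\<dots> = (\<Sum>i\<in>UNIV. \<Sum>a\<in>UNIV. X$(i,a)$(i,a))" by (rule sum_pair)
  also have "\<dots> = real CARD('n)" using F1[OF F] by simp
  finally show ?thesis .
qed

lemma frobO: "frob (outer vecI vecI) (X :: real^('n::finite\<times>'n)^('n\<times>'n)) =
   (\<Sum>i\<in>UNIV. \<Sum>j\<in>UNIV. X$(i,i)$(j,j))"
  unfolding frobA by (simp add: X0ent if_mult3 if_mult1 sum_if_out)

lemma main:
  fixes M B S P :: "real^('n::finite \<times> 'n)^('n \<times> 'n)" and c s0 :: real
  assumes Qx: "(M - B - S) *v vecI = 0"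
  and Qpsd: "psd ((M - B - S) - c *\<^sub>R P)"
  and Pdef: "P = mat 1 - (1 / real CARD('n)) *\<^sub>R outer vecI vecI"
  and Bnn: "nonneg_mat B" and Bx: "hadamard B (outer vecI vecI) = 0"
  and c0: "c \<ge> 0"
  and Sc: "\<And>X. SDR1_feasible X \<Longrightarrow> frob S X = s0"
  shows "SDR1_global_min M (outer vecI vecI) \<and> (c > 0 \<longrightarrow> SDR1_unique_global_min M (outer vecI vecI))"
proof -
  define Q where "Q = M - B - S"
  define X0 :: "real^('n \<times> 'n)^('n \<times> 'n)" where "X0 = outer vecI vecI"
  define n where "n = real CARD('n)"
  have npos: "n > 0" unfolding n_def by simp
  have MQ: "frob M X = frob Q X + frob B X + frob S X" for X
    unfolding Q_def by (simp add: frob_diff1)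
  have PX: "frob P X = n - (1/n) * (\<Sum>i\<in>UNIV. \<Sum>j\<in>UNIV. X$(i,i)$(j,j))" if F: "SDR1_feasible X" for X :: "real^('n \<times> 'n)^('n \<times> 'n)"
    unfolding Pdef by (simp add: frob_diff1 frob_scale1 frobI[OF F] frobO n_def)
  have sumle: "(\<Sum>i\<in>UNIV. \<Sum>j\<in>UNIV. X$(i,i)$(j,j)) \<le> n * n" if F: "SDR1_feasible X" for X :: "real^('n \<times> 'n)^('n \<times> 'n)"
  proof -
    have "(\<Sum>i\<in>UNIV. \<Sum>j\<in>UNIV. X$(i,i)$(j,j)) \<le> (\<Sum>i\<in>(UNIV::'n set). \<Sum>j\<in>(UNIV::'n set). (1::real))"
      by (intro sum_mono) (rule Fle1[OF F])
    then show ?thesis by (simp add: n_def)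
  qed
  have Pnn: "0 \<le> frob P X" if F: "SDR1_feasible X" for X :: "real^('n \<times> 'n)^('n \<times> 'n)"
  proof -
    have "(1/n) * (\<Sum>i\<in>UNIV. \<Sum>j\<in>UNIV. X$(i,i)$(j,j)) \<le> (1/n) * (n*n)"
      using sumle[OF F] npos by (intro mult_left_mono) auto
    then show ?thesis using npos by (simp add: PX[OF F])
  qed
  have psdX: "psd X" if "SDR1_feasible X" for X using that SDR1_feasible_def by blast
  have QX: "c * frob P X \<le> frob Q X" if F: "SDR1_feasible X" for X :: "real^('n \<times> 'n)^('n \<times> 'n)"
  proof -
    have "0 \<le> frob (Q - c *\<^sub>R P) X" using psd_frob[OF Qpsd[folded Q_def] psdX[OF F]] .
    then show ?thesis by (simp add: frob_diff1 frob_scale1)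
  qed
  have BX: "0 \<le> frob B X" if F: "SDR1_feasible X" for X :: "real^('n \<times> 'n)^('n \<times> 'n)"
    unfolding frob_def using Bnn Fnn[OF F] unfolding nonneg_mat_def
    by (intro sum_nonneg mult_nonneg_nonneg) auto
  have Q0: "frob Q X0 = 0"
  proof -
    have "X0 = (\<chi> i j. vecI$i * vecI$j)" unfolding X0_def outer_def by simp
    then have "frob Q X0 = vecI \<bullet> (Q *v vecI)" by (simp add: frob_outer inner_mv)
    then show ?thesis using Qx Q_def by simp
  qed
  have B0: "frob B X0 = 0"
  proof -
    have h: "B$i$j * X0$i$j = 0" for i j
      using arg_cong[of _ _ "\<lambda>N. N$i$j", OF Bx] by (simp add: hadamard_def X0_def)
    show ?thesis unfolding frob_def by (simp only: h sum.neutral_const)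
  qed
  have feas0: "SDR1_feasible X0" unfolding X0_def by (rule X0feas)
  have M0: "frob M X0 = s0" using MQ Q0 B0 Sc[OF feas0] by simp
  have Mge: "s0 \<le> frob M X" if F: "SDR1_feasible X" for X :: "real^('n \<times> 'n)^('n \<times> 'n)"
  proof -
    have "0 \<le> c * frob P X" using c0 Pnn[OF F] by simp
    then show ?thesis using MQ[of X] QX[OF F] BX[OF F] Sc[OF F] by linarith
  qed
  have glob: "SDR1_global_min M X0"
    unfolding SDR1_global_min_def using feas0 M0 Mge by simp
  have uniq: "X = X0" if cpos: "c > 0" and G: "SDR1_global_min M X" for X :: "real^('n \<times> 'n)^('n \<times> 'n)"
  proof -
    have F: "SDR1_feasible X" and le: "frob M X \<le> frob M X0"
      using G feas0 unfolding SDR1_global_min_def by auto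
    have "c * frob P X \<le> 0" using le M0 MQ[of X] QX[OF F] BX[OF F] Sc[OF F] by linarith
    then have "frob P X \<le> 0" using cpos by (simp add: mult_le_0_iff)
    then have "n * n \<le> (\<Sum>i\<in>UNIV. \<Sum>j\<in>UNIV. X$(i,i)$(j,j))"
      using npos by (simp add: PX[OF F] field_simps)
    then have s0: "(\<Sum>i\<in>UNIV. \<Sum>j\<in>UNIV. 1 - X$(i,i)$(j,j)) \<le> 0"
      by (simp add: sum_subtractf n_def)
    have nnt: "0 \<le> 1 - X$(i,i)$(j,j)" for i j using Fle1[OF F] by simp
    have s1: "(\<Sum>i\<in>UNIV. \<Sum>j\<in>UNIV. 1 - X$(i,i)$(j,j)) = 0"
      using s0 nnt by (meson antisym sum_nonneg)
    have "\<forall>i\<in>UNIV. (\<Sum>j\<in>UNIV. 1 - X$(i,i)$(j,j)) = 0"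
      using s1 by (subst sum_nonneg_eq_0_iff[symmetric]) (auto intro: sum_nonneg nnt)
    then have diag1: "X$(i,i)$(j,j) = 1" for i j
      using nnt by (simp add: sum_nonneg_eq_0_iff)
    have off0: "X$(i,a)$(j,b) = 0" if ne: "(a,b) \<noteq> (i,j)" for i j a b
    proof -
      define f where "f = (\<lambda>q::'n\<times>'n. X$(i, fst q)$(j, snd q))"
      have "sum f UNIV = 1" using F2[OF F, of i j] unfolding f_def by (simp add: sum_pair)
      moreover have "sum f UNIV = f (i,j) + sum f (UNIV - {(i,j)})"
        by (simp add: sum.remove)
      ultimately have "sum f (UNIV - {(i,j)}) = 0" using diag1 by (simp add: f_def)
      then have "\<forall>q\<in>UNIV - {(i,j)}. f q = 0"
        by (subst sum_nonneg_eq_0_iff[symmetric]) (auto simp: f_def Fnn[OF F])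
      then have "f (a,b) = 0" using ne by blast
      then show ?thesis by (simp add: f_def)
    qed
    show "X = X0"
    proof (subst vec_eq_iff, intro allI, subst vec_eq_iff, intro allI)
      fix p q :: "'n \<times> 'n"
      obtain i a where p: "p = (i,a)" by (cases p)
      obtain j b where q: "q = (j,b)" by (cases q)
      show "X$p$q = X0$p$q"
        using diag1 off0 unfolding p q X0_def X0ent by auto
    qed
  qed
  show ?thesis
    using glob uniq unfolding X0_def SDR1_unique_global_min_def by blast
qed


theorem theorem3:
  fixes A \<Delta> T K Z H :: "real^'n^'n"
    and B :: "real^('n \<times> 'n)^('n \<times> 'n)"
    and c :: real
  assumes symA: "symmetric_mat A" and symD: "symmetric_mat \<Delta>"
    and symB: "symmetric_mat B" and Bnn: "nonneg_mat B"
    and Bx: "hadamard B (outer vecI vecI) = 0"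
    and symT: "symmetric_mat T" and symK: "symmetric_mat K"
    and symZ: "symmetric_mat Z" and symH: "symmetric_mat H"
    and c0: "c \<ge> 0"
    and Qx: "(let C = A + \<Delta>;
                 D = kron (mat 1 :: real^'n^'n) A - kron C (mat 1 :: real^'n^'n);
                 M = D ** D;
                 S = kron T (mat 1) + kron (mat 1) K + kron Jmat H + kron Z Jmat;
                 Q = M - B - S
             in Q *v vecI = 0 \<and>
                psd (Q - c *\<^sub>R (mat 1 - (1 / real CARD('n)) *\<^sub>R outer vecI vecI)))"
  shows "(let C = A + \<Delta>;
              D = kron (mat 1 :: real^'n^'n) A - kron C (mat 1 :: real^'n^'n)
          in SDR1_global_min (D ** D) (outer vecI vecI) \<and>
             (c > 0 \<longrightarrow> SDR1_unique_global_min (D ** D) (outer vecI vecI)))"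
  proof -
  define C where "C = A + \<Delta>"
  define D where "D = kron (mat 1 :: real^'n^'n) A - kron C (mat 1 :: real^'n^'n)"
  define S :: "real^('n \<times> 'n)^('n \<times> 'n)" where "S = kron T (mat 1) + kron (mat 1) K + kron Jmat H + kron Z Jmat"
  from Qx have h1: "(D ** D - B - S) *v vecI = 0"
    and h2: "psd ((D ** D - B - S) - c *\<^sub>R (mat 1 - (1 / real CARD('n)) *\<^sub>R outer vecI vecI))"
    by (simp_all add: Let_def C_def D_def S_def)
  have "SDR1_global_min (D ** D) (outer vecI vecI) \<and> (c > 0 \<longrightarrow> SDR1_unique_global_min (D ** D) (outer vecI vecI))"
    apply (rule main[OF h1 h2 refl Bnn Bx c0])
    unfolding S_def by (rule frobS)
  then show ?thesis by (simp add: Let_def C_def D_def)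
qed

end
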